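(* Let $k$ and $s$ be positive integers and suppose that $K_{k+1,s+1}$ cannot be $k$-page embedded. Let $n$ be a positive integer and $q:=n\bmod s$. Then \[ \nu_k(K_{k+1,n}) \ge q\binom{\frac{n-q}{s}+1}{2} + (s-q)\binom{\frac{n-q}{s}}{2}. \]
   Context: A book with $k$ pages consists of a line (the spine) and $k$ half-planes (the pages) whose common boundary is the spine. A $k$-page drawing of a graph places all vertices on the spine and draws each edge inside a single page; a $k$-page embedding is a $k$-page drawing without crossings. $\nu_k(G)$ is the minimum number of crossings over all $k$-page drawings of $G$. Convention: $\binom{a}{b}=0$ whenever $a<b$. *)

theory Defs
  imports Main
begin

text \<open>A graph is given by a finite vertex set V and a set E of edges, each a
two-element subset of V. A k-page drawing places the vertices on the spine
(an injective position function into the naturals, i.e. a linear order on V)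
and assigns every edge to one of the pages 0..k-1.\<close>

definition book_drawing :: "nat \<Rightarrow> 'v set \<Rightarrow> 'v set set \<Rightarrow> ('v \<Rightarrow> nat) \<Rightarrow> ('v set \<Rightarrow> nat) \<Rightarrow> bool" where
  "book_drawing k V E pos page \<longleftrightarrow> inj_on pos V \<and> (\<forall>e\<in>E. page e < k)"

text \<open>Edge e = {a,b} and edge f = {c,d} interleave along the spine with
pos a < pos c < pos b < pos d (each crossing pair is counted once, with the
edge having the leftmost endpoint first).\<close>

definition interleave :: "('v \<Rightarrow> nat) \<Rightarrow> 'v set \<Rightarrow> 'v set \<Rightarrow> bool" where
  "interleave pos e f \<longleftrightarrow> (\<exists>a b c d. e = {a, b} \<and> f = {c, d} \<and>
      pos a < pos c \<and> pos c < pos b \<and> pos b < pos d)"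

definition book_crossings :: "'v set set \<Rightarrow> ('v \<Rightarrow> nat) \<Rightarrow> ('v set \<Rightarrow> nat) \<Rightarrow> nat" where
  "book_crossings E pos page =
     card {(e, f). e \<in> E \<and> f \<in> E \<and> page e = page f \<and> interleave pos e f}"

definition book_crossing_number :: "nat \<Rightarrow> 'v set \<Rightarrow> 'v set set \<Rightarrow> nat" where
  "book_crossing_number k V E =
     Inf {book_crossings E pos page | pos page. book_drawing k V E pos page}"

definition book_embeddable :: "nat \<Rightarrow> 'v set \<Rightarrow> 'v set set \<Rightarrow> bool" where
  "book_embeddable k V E \<longleftrightarrow>
     (\<exists>pos page. book_drawing k V E pos page \<and> book_crossings E pos page = 0)"

definition KV :: "nat \<Rightarrow> nat \<Rightarrow> (nat + nat) set" where
  "KV m n = Inl ` {..<m} \<union> Inr ` {..<n}"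

definition KE :: "nat \<Rightarrow> nat \<Rightarrow> (nat + nat) set set" where
  "KE m n = {{Inl i, Inr j} | i j. i < m \<and> j < n}"

end

theory Submission imports Defs begin
definition Tur :: "nat \<Rightarrow> nat \<Rightarrow> nat" where
  "Tur s n = (n mod s) * ((n div s + 1) choose 2) + (s - n mod s) * ((n div s) choose 2)"

lemma ch2: "Suc d choose 2 = d + (d choose 2)"
  by (simp add: numeral_2_eq_2)

lemma Tur_small: "n < s \<Longrightarrow> Tur s n = 0"
  by (simp add: Tur_def)

lemma Tur_add: assumes "s > 0" shows "Tur s (m + s) = Tur s m + m"
proof -
  have a: "(m + s) mod s = m mod s" "(m+s) div s = Suc (m div s)" using assms by (auto simp: div_add_self2)
  define q where "q = m mod s"
  define d where "d = m div s"
  define r where "r = s - q"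
  have qs: "q \<le> s" unfolding q_def using assms by (meson less_imp_le mod_less_divisor)
  have sr: "s = q + r" unfolding r_def using qs by simp
  have m: "m = s * d + q" unfolding q_def d_def by simp
  have "Tur s (m+s) = q * (Suc (Suc d) choose 2) + r * (Suc d choose 2)"
    unfolding Tur_def a q_def[symmetric] d_def[symmetric] r_def by simp
  also have "\<dots> = (q * (Suc d choose 2) + r * (d choose 2)) + (q * (d+1) + r * d)"
    by (simp add: ch2 algebra_simps)
  also have "q * (d+1) + r * d = m" unfolding m sr by (simp add: algebra_simps)
  also have "q * (Suc d choose 2) + r * (d choose 2) = Tur s m"
    unfolding Tur_def q_def[symmetric] d_def[symmetric] r_def by simp
  finally show ?thesis .
qed

lemma Tur_Suc: assumes "s > 0" shows "Tur s n \<le> Tur s (Suc n)"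
proof (cases "Suc (n mod s) < s")
  case True
  then have a: "Suc n mod s = Suc (n mod s)" "Suc n div s = n div s"
    by (simp_all add: mod_Suc div_Suc)
  show ?thesis unfolding Tur_def a using True
    by (simp add: ch2 algebra_simps diff_mult_distrib)
next
  case False
  then have b: "Suc (n mod s) = s" using assms by (meson le_neq_implies_less mod_less_divisor Suc_leI)
  then have a: "Suc n mod s = 0" "Suc n div s = Suc (n div s)"
    by (simp_all add: mod_Suc div_Suc)
  have "Tur s n = (s - 1) * (Suc (n div s) choose 2) + ((n div s) choose 2)"
  proof -
    have "n mod s = s - 1" "s - n mod s = 1" using b by auto
    then show ?thesis unfolding Tur_def by simp
  qed
  also have "\<dots> \<le> (s - 1) * (Suc (n div s) choose 2) + (Suc (n div s) choose 2)"
    by (simp add: ch2)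
  also have "\<dots> = s * (Suc (n div s) choose 2)" using assms
    by (metis Suc_diff_1 add.commute mult_Suc)
  also have "\<dots> = Tur s (Suc n)" unfolding Tur_def a by simp
  finally show ?thesis .
qed

lemma Tur_mono: assumes "s > 0" "m \<le> n" shows "Tur s m \<le> Tur s n"
  using assms(2) by (induction rule: dec_induct) (auto intro: order_trans Tur_Suc[OF assms(1)])

lemma Tur_step: assumes "s > 0" "1 \<le> a" "a \<le> s" "a \<le> n"
  shows "Tur s n \<le> Tur s (n - a) + (n - a)"
proof (cases "n < s")
  case True then show ?thesis by (simp add: Tur_small)
next
  case False
  then have "Tur s n = Tur s (n - s) + (n - s)" using Tur_add[OF assms(1), of "n-s"] by simp
  also have "\<dots> \<le> Tur s (n - a) + (n - a)"
    using Tur_mono[OF assms(1), of "n-s" "n-a"] assms by linarith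
  finally show ?thesis .
qed

lemma turan:
  fixes P :: "'a set set"
  assumes "s > 0" "finite V"
    and "\<forall>S\<subseteq>V. card S = s + 1 \<longrightarrow> (\<exists>x\<in>S. \<exists>y\<in>S. x \<noteq> y \<and> {x, y} \<in> P)"
  shows "Tur s (card V) \<le> card {e\<in>P. e \<subseteq> V \<and> card e = 2}"
  using assms(2,3)
proof (induction "card V" arbitrary: V rule: less_induct)
  case less
  show ?case
  proof (cases "V = {}")
    case True then show ?thesis by (simp add: Tur_def numeral_2_eq_2)
  next
    case False
    then obtain v0 where v0: "v0 \<in> V" by blast
    define F where "F = {I. I \<subseteq> V \<and> (\<forall>x\<in>I. \<forall>y\<in>I. x \<noteq> y \<longrightarrow> {x,y} \<notin> P)}"
    have finF: "finite F" unfolding F_def using less.prems(1) by (simp add: finite_subset)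
    have "{v0} \<in> F" unfolding F_def using v0 by auto
    then have neF: "card ` F \<noteq> {}" by blast
    define m where "m = Max (card ` F)"
    have "m \<in> card ` F" unfolding m_def using finF neF by (intro Max_in) auto
    then obtain I where I: "I \<in> F" "card I = m" by blast
    have maxI: "\<And>J. J \<in> F \<Longrightarrow> card J \<le> card I" unfolding I(2) m_def using finF by auto
    have IV: "I \<subseteq> V" and indep: "\<forall>x\<in>I. \<forall>y\<in>I. x \<noteq> y \<longrightarrow> {x,y} \<notin> P"
      using I(1) unfolding F_def by auto
    have finI: "finite I" using IV less.prems(1) finite_subset by blast
    have cI1: "1 \<le> card I" using maxI[OF \<open>{v0} \<in> F\<close>] by simp
    have cIs: "card I \<le> s"
    proof (rule ccontr)
      assume "\<not> card I \<le> s"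
      then obtain S where S: "S \<subseteq> I" "card S = s + 1"
        using obtain_subset_with_card_n[of "s+1" I] by (metis not_less_eq_eq Suc_eq_plus1)
      then show False using less.prems(2) IV indep by (metis subset_eq)
    qed
    define W where "W = V - I"
    have adj: "\<forall>v\<in>W. \<exists>u\<in>I. {u,v} \<in> P"
    proof
      fix v assume v: "v \<in> W"
      show "\<exists>u\<in>I. {u,v} \<in> P"
      proof (rule ccontr)
        assume na: "\<not> (\<exists>u\<in>I. {u,v} \<in> P)"
        have "insert v I \<in> F" unfolding F_def using v W_def IV indep na
          by (auto simp: insert_commute)
        then have "card (insert v I) \<le> card I" by (rule maxI)
        moreover have "card (insert v I) = Suc (card I)" using v W_def finI by simp
        ultimately show False by simp
      qed
    qed
    then obtain f where f: "\<forall>v\<in>W. f v \<in> I \<and> {f v, v} \<in> P" by metis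
    have finW: "finite W" unfolding W_def using less.prems(1) by simp
    have cW: "card W = card V - card I" unfolding W_def using IV finI by (simp add: card_Diff_subset)
    have lt: "card W < card V" using cW cI1 IV less.prems(1) card_mono[OF less.prems(1) IV] by linarith
    have condW: "\<forall>S\<subseteq>W. card S = s + 1 \<longrightarrow> (\<exists>x\<in>S. \<exists>y\<in>S. x \<noteq> y \<and> {x, y} \<in> P)"
      using less.prems(2) W_def by blast
    have IH: "Tur s (card W) \<le> card {e\<in>P. e \<subseteq> W \<and> card e = 2}"
      using less.hyps[OF lt finW condW] .
    define X where "X = {e\<in>P. e \<subseteq> V \<and> card e = 2 \<and> e \<inter> I \<noteq> {}}"
    have finEV: "finite {e\<in>P. e \<subseteq> V \<and> card e = 2}"
      by (rule finite_subset[of _ "Pow V"]) (use less.prems(1) in auto)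
    have sub: "{e\<in>P. e \<subseteq> W \<and> card e = 2} \<union> X \<subseteq> {e\<in>P. e \<subseteq> V \<and> card e = 2}"
      unfolding X_def W_def by auto
    have disj: "{e\<in>P. e \<subseteq> W \<and> card e = 2} \<inter> X = {}" unfolding X_def W_def by auto
    have finX: "finite X" using finEV unfolding X_def by (rule rev_finite_subset) auto
    have finEW: "finite {e\<in>P. e \<subseteq> W \<and> card e = 2}" using finEV unfolding W_def by (rule rev_finite_subset) auto
    have injX: "inj_on (\<lambda>v. {f v, v}) W"
    proof (rule inj_onI)
      fix v w assume "v \<in> W" "w \<in> W" "{f v, v} = {f w, w}"
      then show "v = w" using f W_def by (metis Diff_iff doubleton_eq_iff)
    qed
    have imX: "(\<lambda>v. {f v, v}) ` W \<subseteq> X"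
    proof
      fix e assume "e \<in> (\<lambda>v. {f v, v}) ` W"
      then obtain v where v: "v \<in> W" "e = {f v, v}" by blast
      have "f v \<noteq> v" using f v W_def by auto
      then show "e \<in> X" unfolding X_def using f v W_def IV by auto
    qed
    have "card W \<le> card X" using card_inj_on_le[OF injX imX finX] .
    have "Tur s (card V) \<le> Tur s (card W) + card W"
      using Tur_step[OF assms(1) cI1 cIs card_mono[OF less.prems(1) IV]] cW by simp
    also have "\<dots> \<le> card {e\<in>P. e \<subseteq> W \<and> card e = 2} + card X"
      using IH \<open>card W \<le> card X\<close> by simp
    also have "\<dots> = card ({e\<in>P. e \<subseteq> W \<and> card e = 2} \<union> X)"
      using card_Un_disjoint[OF finEW finX disj] by simp
    also have "\<dots> \<le> card {e\<in>P. e \<subseteq> V \<and> card e = 2}"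
      by (rule card_mono[OF finEV sub])
    finally show ?thesis .
  qed
qed

lemma interleave_E:
  assumes "interleave pos e f"
  obtains a b c d where "e = {a, b}" "f = {c, d}" "pos a < pos c"
    "pos c < pos b" "pos b < pos d"
  using assms unfolding interleave_def by (elim exE conjE) (rule that)
lemma interleave_disj: "interleave pos e f \<Longrightarrow> e \<inter> f = {}"
proof -
  assume "interleave pos e f"
  then obtain a b c d where h: "e = {a, b}" "f = {c, d}" "pos a < pos c"
    "pos c < pos b" "pos b < pos d" by (rule interleave_E)
  have "a \<noteq> c" "a \<noteq> d" "b \<noteq> c" "b \<noteq> d" using h(3-5) by auto
  then show ?thesis unfolding h(1,2) by auto
qed

lemma interleave_map: "interleave (pos \<circ> \<phi>) e f \<Longrightarrow> interleave pos (\<phi> ` e) (\<phi> ` f)"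
proof -
  assume "interleave (pos \<circ> \<phi>) e f"
  then obtain a b c d where "e = {a, b}" "f = {c, d}" "(pos \<circ> \<phi>) a < (pos \<circ> \<phi>) c"
    "(pos \<circ> \<phi>) c < (pos \<circ> \<phi>) b" "(pos \<circ> \<phi>) b < (pos \<circ> \<phi>) d" by (rule interleave_E)
  then show ?thesis unfolding interleave_def
    by (intro exI[of _ "\<phi> a"] exI[of _ "\<phi> b"] exI[of _ "\<phi> c"] exI[of _ "\<phi> d"]) simp
qed

lemma finite_KE: "finite (KE m n)"
proof -
  have "KE m n \<subseteq> (\<lambda>(i,j). {Inl i, Inr j}) ` ({..<m} \<times> {..<n})"
    unfolding KE_def by auto
  then show ?thesis by (rule finite_subset) simp
qed

definition rj :: "(nat + nat) set \<Rightarrow> nat" where "rj e = (THE j. Inr j \<in> e)"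

lemma rj_eq: "rj {Inl i, Inr x} = x"
  unfolding rj_def by (rule the_equality) auto

lemma main_bound:
  assumes "k > 0" and "s > 0"
    and ne: "\<not> book_embeddable k (KV (k + 1) (s + 1)) (KE (k + 1) (s + 1))"
    and dr: "book_drawing k (KV (k + 1) n) (KE (k + 1) n) pos page"
  shows "Tur s n \<le> book_crossings (KE (k + 1) n) pos page"
proof -
  define C where "C = {(e, f). e \<in> KE (k + 1) n \<and> f \<in> KE (k + 1) n \<and> page e = page f \<and> interleave pos e f}"
  define P where "P = {{x,y} | x y. x \<noteq> y \<and> (\<exists>i i'. ({Inl i, Inr x},{Inl i', Inr y}) \<in> C)}"
  have finC: "finite C" unfolding C_def
    by (rule finite_subset[of _ "KE (k+1) n \<times> KE (k+1) n"]) (auto simp: finite_KE)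
  have PC: "P \<subseteq> (\<lambda>(e,f). {rj e, rj f}) ` C"
  proof
    fix p assume "p \<in> P"
    then obtain x y i i' where "p = {x,y}" "({Inl i, Inr x},{Inl i', Inr y}) \<in> C"
      unfolding P_def by blast
    then show "p \<in> (\<lambda>(e,f). {rj e, rj f}) ` C"
      by (intro rev_image_eqI[of "({Inl i, Inr x},{Inl i', Inr y})"]) (auto simp: rj_eq)
  qed
  have cPC: "card P \<le> card C"
    using card_mono[OF finite_imageI[OF finC] PC] card_image_le[OF finC, of "\<lambda>(e,f). {rj e, rj f}"] by linarith
  have finP: "finite P" using PC finC finite_subset by blast
  have cond: "\<forall>S\<subseteq>{..<n}. card S = s + 1 \<longrightarrow> (\<exists>x\<in>S. \<exists>y\<in>S. x \<noteq> y \<and> {x, y} \<in> P)"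
  proof (intro allI impI)
    fix S assume S: "S \<subseteq> {..<n}" "card S = s + 1"
    have finS: "finite S" using S(1) finite_subset by blast
    obtain h where h: "bij_betw h {0..<card S} S" using ex_bij_betw_nat_finite[OF finS] by blast
    have h1: "inj_on h {..<s+1}" "h ` {..<s+1} = S" using h S(2) unfolding bij_betw_def
      by (auto simp: atLeast0LessThan)
    define \<phi> :: "nat + nat \<Rightarrow> nat + nat" where "\<phi> = case_sum Inl (Inr \<circ> h)"
    have \<phi>l[simp]: "\<phi> (Inl i) = Inl i" and \<phi>r[simp]: "\<phi> (Inr t) = Inr (h t)" for i t
      unfolding \<phi>_def by auto
    have inj\<phi>: "inj_on \<phi> (KV (k+1) (s+1))"
    proof (rule inj_onI)
      fix u v assume "u \<in> KV (k+1) (s+1)" "v \<in> KV (k+1) (s+1)" "\<phi> u = \<phi> v"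
      then show "u = v" using h1(1) unfolding KV_def by (auto dest: inj_onD)
    qed
    have im\<phi>: "\<phi> ` KV (k+1) (s+1) \<subseteq> KV (k+1) n"
      using h1(2) S(1) unfolding KV_def by auto
    have injpos: "inj_on pos (KV (k+1) n)" and pg: "\<forall>e\<in>KE (k+1) n. page e < k"
      using dr unfolding book_drawing_def by auto
    have KEmap: "\<phi> ` {Inl i, Inr t} = {Inl i, Inr (h t)}" for i t
      by (simp only: image_insert image_empty \<phi>l \<phi>r)
    have KEin: "e \<in> KE (k+1) (s+1) \<Longrightarrow> \<phi> ` e \<in> KE (k+1) n" for e
    proof -
      assume "e \<in> KE (k+1) (s+1)"
      then obtain i t where it: "e = {Inl i, Inr t}" "i < k+1" "t < s+1" unfolding KE_def by blast
      have "h t < n" using h1(2) S(1) it(3) by blast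
      moreover have "\<phi> ` e = {Inl i, Inr (h t)}" unfolding it(1) by (rule KEmap)
      ultimately show ?thesis unfolding KE_def using it(2) by blast
    qed
    have dr2: "book_drawing k (KV (k + 1) (s + 1)) (KE (k + 1) (s + 1)) (pos \<circ> \<phi>) (\<lambda>e. page (\<phi> ` e))"
      unfolding book_drawing_def
      using comp_inj_on[OF inj\<phi> inj_on_subset[OF injpos im\<phi>]] pg KEin by auto
    then have "book_crossings (KE (k + 1) (s + 1)) (pos \<circ> \<phi>) (\<lambda>e. page (\<phi> ` e)) \<noteq> 0"
      using ne unfolding book_embeddable_def by metis
    then have "{(e, f). e \<in> KE (k+1) (s+1) \<and> f \<in> KE (k+1) (s+1) \<and> page (\<phi> ` e) = page (\<phi> ` f) \<and> interleave (pos \<circ> \<phi>) e f} \<noteq> {}"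
      unfolding book_crossings_def by (metis card.empty)
    then obtain e f where ef: "e \<in> KE (k+1) (s+1)" "f \<in> KE (k+1) (s+1)"
      "page (\<phi> ` e) = page (\<phi> ` f)" "interleave (pos \<circ> \<phi>) e f"
      by blast
    obtain i t where e: "e = {Inl i, Inr t}" "i < k+1" "t < s+1" using ef(1) unfolding KE_def by auto
    obtain i' t' where f: "f = {Inl i', Inr t'}" "i' < k+1" "t' < s+1" using ef(2) unfolding KE_def by auto
    have "t \<noteq> t'" using interleave_disj[OF ef(4)] e f by auto
    then have hne: "h t \<noteq> h t'" using h1(1) e(3) f(3) by (auto dest: inj_onD)
    have hS: "h t \<in> S" "h t' \<in> S" using h1(2) e(3) f(3) by auto
    have "({Inl i, Inr (h t)}, {Inl i', Inr (h t')}) \<in> C"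
      unfolding C_def using KEin[OF ef(1)] KEin[OF ef(2)] ef(3) interleave_map[OF ef(4)] e f
      by (simp add: KEmap)
    then have "{h t, h t'} \<in> P" unfolding P_def using hne by blast
    then show "\<exists>x\<in>S. \<exists>y\<in>S. x \<noteq> y \<and> {x, y} \<in> P" using hS hne by blast
  qed
  have "Tur s (card {..<n}) \<le> card {e\<in>P. e \<subseteq> {..<n} \<and> card e = 2}"
    by (rule turan[OF assms(2) _ cond]) simp
  also have "\<dots> \<le> card P" using finP by (intro card_mono) auto
  also have "\<dots> \<le> card C" by (rule cPC)
  finally show ?thesis unfolding book_crossings_def C_def by simp
qed

theorem proposition13:
  fixes k s n :: nat
  assumes "k > 0" and "s > 0"
    and "\<not> book_embeddable k (KV (k + 1) (s + 1)) (KE (k + 1) (s + 1))"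
    and "n > 0"
  shows "let q = n mod s in
    book_crossing_number k (KV (k + 1) n) (KE (k + 1) n)
      \<ge> q * (((n - q) div s + 1) choose 2) + (s - q) * (((n - q) div s) choose 2)"
proof -
  have dv: "(n - n mod s) div s = n div s" by (simp add: minus_mod_eq_mult_div)
  define X where "X = {book_crossings (KE (k + 1) n) pos page | pos page. book_drawing k (KV (k + 1) n) (KE (k + 1) n) pos page}"
  define pos0 :: "nat + nat \<Rightarrow> nat" where "pos0 = case_sum (\<lambda>i. 2*i) (\<lambda>j. 2*j+1)"
  have "inj pos0" unfolding pos0_def by (rule injI) (auto split: sum.splits, presburger+)
  then have "book_drawing k (KV (k + 1) n) (KE (k + 1) n) pos0 (\<lambda>_. 0)"
    unfolding book_drawing_def using assms(1) by (auto intro: inj_on_subset)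
  then have "X \<noteq> {}" unfolding X_def by blast
  then have "Tur s n \<le> Inf X"
  proof (rule cInf_greatest)
    fix x assume "x \<in> X"
    then obtain pos page where "x = book_crossings (KE (k + 1) n) pos page"
      "book_drawing k (KV (k + 1) n) (KE (k + 1) n) pos page" unfolding X_def by blast
    then show "Tur s n \<le> x" using main_bound[OF assms(1-3)] by simp
  qed
  then show ?thesis unfolding Let_def dv book_crossing_number_def X_def[symmetric] Tur_def by simp
qed

end
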